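(* For every $13$-card Rummy hand $h$ and every choice of wild-card joker $wcj$, we have $\mathrm{MinDist}(h,wcj)\le 8$.
   Context: Rummy is played with a single standard deck (ranks $A,2,3,\dots,10,J,Q,K$ in each of the four suits) together with a printed joker. A hand is a set of $13$ distinct cards from this deck. A wild-card joker $wcj$ is a designated card; every card of the same rank as $wcj$ (and the printed joker) is a joker, which may stand in for any other card. A meld is one of: a pure sequence (at least $3$ cards of the same suit with consecutive ranks in the order $A\,2\,3\,4\,5\,6\,7\,8\,9\,10\,J\,Q\,K\,A$, i.e. the ace may be low or high but sequences do not wrap around through $K\,A\,2$); an impure sequence (as a pure sequence, but one or more cards replaced by jokers); a pure set (at least $3$ cards of the same rank and pairwise different suits); an impure set (as a pure set, but one or more cards replaced by jokers). A hand is declarable if it can be partitioned into melds of which at least one is a pure sequence and at least one other is a (pure or impure) sequence. For hands $h,h'$, $d_{wcj}(h,h')$ is the minimum number of cards of $h$ that must be replaced to obtain $h'$ (i.e. $13-|h\cap h'|$), and $\mathrm{MinDist}(h,wcj)=\min\{d_{wcj}(h,h') : h' \text{ a declarable hand}\}$. *)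

theory Defs
  imports Main "HOL-Library.Disjoint_Sets"
begin

datatype suit = Spades | Hearts | Diamonds | Clubs

text \<open>Ranks are numbered 1..13: 1 = Ace, 2..10, 11 = J, 12 = Q, 13 = K.
  PJoker is the printed joker.\<close>
datatype card = Std suit nat | PJoker

definition deck :: "card set" where
  "deck = {Std s r | s r. 1 \<le> r \<and> r \<le> 13} \<union> {PJoker}"

definition is_hand :: "card set \<Rightarrow> bool" where
  "is_hand h \<longleftrightarrow> h \<subseteq> deck \<and> card h = 13"

fun rank_of :: "card \<Rightarrow> nat" where
  "rank_of (Std s r) = r"
| "rank_of PJoker = 0"

definition is_joker :: "card \<Rightarrow> card \<Rightarrow> bool" where
  "is_joker wcj c \<longleftrightarrow> c = PJoker \<or> (c \<noteq> PJoker \<and> rank_of c = rank_of wcj)"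

text \<open>Positions in the order A 2 3 ... 10 J Q K A are 1..14; position 14 is the high ace.\<close>
definition rank_at :: "nat \<Rightarrow> nat" where
  "rank_at p = (if p = 14 then 1 else p)"

definition pure_sequence :: "card set \<Rightarrow> bool" where
  "pure_sequence S \<longleftrightarrow> (\<exists>s i j. 1 \<le> i \<and> i + 2 \<le> j \<and> j \<le> 14 \<and> \<not> (i = 1 \<and> j = 14) \<and>
      S = (\<lambda>p. Std s (rank_at p)) ` {i..j})"

definition pure_set :: "card set \<Rightarrow> bool" where
  "pure_set S \<longleftrightarrow> (\<exists>r T. 1 \<le> r \<and> r \<le> 13 \<and> card T \<ge> 3 \<and> S = (\<lambda>s. Std s r) ` T)"

definition impure :: "(card set \<Rightarrow> bool) \<Rightarrow> card \<Rightarrow> card set \<Rightarrow> bool" where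
  "impure P wcj S \<longleftrightarrow> (\<exists>T R J. P T \<and> R \<subseteq> T \<and> R \<noteq> {} \<and> J \<subseteq> deck \<and>
      (\<forall>c\<in>J. is_joker wcj c) \<and> card J = card R \<and> J \<inter> (T - R) = {} \<and> S = (T - R) \<union> J)"

definition impure_sequence :: "card \<Rightarrow> card set \<Rightarrow> bool" where
  "impure_sequence wcj S \<longleftrightarrow> impure pure_sequence wcj S"

definition impure_set :: "card \<Rightarrow> card set \<Rightarrow> bool" where
  "impure_set wcj S \<longleftrightarrow> impure pure_set wcj S"

definition is_sequence :: "card \<Rightarrow> card set \<Rightarrow> bool" where
  "is_sequence wcj S \<longleftrightarrow> pure_sequence S \<or> impure_sequence wcj S"

definition is_meld :: "card \<Rightarrow> card set \<Rightarrow> bool" where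
  "is_meld wcj S \<longleftrightarrow> pure_sequence S \<or> impure_sequence wcj S \<or> pure_set S \<or> impure_set wcj S"

definition declarable :: "card \<Rightarrow> card set \<Rightarrow> bool" where
  "declarable wcj h \<longleftrightarrow> is_hand h \<and> (\<exists>M. partition_on h M \<and> (\<forall>m\<in>M. is_meld wcj m) \<and>
      (\<exists>m1\<in>M. \<exists>m2\<in>M. m1 \<noteq> m2 \<and> pure_sequence m1 \<and> is_sequence wcj m2))"

definition dist :: "card set \<Rightarrow> card set \<Rightarrow> nat" where
  "dist h h' = 13 - card (h \<inter> h')"

definition MinDist :: "card set \<Rightarrow> card \<Rightarrow> nat" where
  "MinDist h wcj = Min {dist h h' | h'. declarable wcj h'}"

end

theory Submission
  imports Defs
begin

definition run :: "suit \<Rightarrow> nat \<Rightarrow> nat \<Rightarrow> card set" where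
  "run s i j = Std s ` {i..j}"

lemma run_pure: "1 \<le> i \<Longrightarrow> i + 2 \<le> j \<Longrightarrow> j \<le> 13 \<Longrightarrow> pure_sequence (run s i j)"
  unfolding pure_sequence_def run_def
  apply (rule exI[of _ s], rule exI[of _ i], rule exI[of _ j])
  by (auto simp: rank_at_def intro!: image_cong)

lemma run_card[simp]: "card (run s i j) = Suc j - i"
  unfolding run_def by (simp add: card_image inj_on_def)

lemma run_finite[simp]: "finite (run s i j)"
  unfolding run_def by simp

lemma mem_run[simp]: "Std s' r \<in> run s i j \<longleftrightarrow> s' = s \<and> i \<le> r \<and> r \<le> j"
  "PJoker \<notin> run s i j"
  unfolding run_def by auto

lemma run_deck: "1 \<le> i \<Longrightarrow> j \<le> 13 \<Longrightarrow> run s i j \<subseteq> deck"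
  unfolding run_def deck_def by auto

lemma run_sub: "1 \<le> i \<Longrightarrow> j \<le> 13 \<Longrightarrow> run s i j \<subseteq> Std s ` {1..13}"
  unfolding run_def by auto

lemma hi_pure: "pure_sequence {Std s 11, Std s 12, Std s 13, Std s 1}"
proof -
  have eq: "{11..14::nat} = {11,12,13,14}" by auto
  have e: "(\<lambda>p. Std s (rank_at p)) ` {11..14::nat} = {Std s 11, Std s 12, Std s 13, Std s 1}"
    unfolding eq by (auto simp: rank_at_def)
  show ?thesis unfolding pure_sequence_def
    apply (rule exI[of _ s], rule exI[of _ 11], rule exI[of _ 14])
    using e by simp
qed

lemma pair_lemma:
  assumes K: "K \<subseteq> {1..13::nat}" and c: "card K \<ge> 4"
  shows "(1 \<in> K \<and> 13 \<in> K) \<or> (\<exists>x y i. x \<in> K \<and> y \<in> K \<and> x \<noteq> y \<and> 1 \<le> i \<and> i + 3 \<le> 13 \<and> i \<le> x \<and> x \<le> i + 3 \<and> i \<le> y \<and> y \<le> i + 3)"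
proof (cases "1 \<in> K \<and> 13 \<in> K")
  case True then show ?thesis by blast
next
  case False
  define lo :: nat where "lo = (if 1 \<in> K then 1 else 2)"
  have Kl: "lo \<le> r \<and> r \<le> lo + 11" if r: "r \<in> K" for r
  proof -
    have r1: "1 \<le> r" "r \<le> 13" using K r by auto
    show ?thesis
    proof (cases "1 \<in> K")
      case True
      then have "13 \<notin> K" using False by blast
      then have "r \<noteq> 13" using r by blast
      then show ?thesis using r1 True unfolding lo_def by simp
    next
      case F: False
      then have "r \<noteq> 1" using r by blast
      then show ?thesis using r1 F unfolding lo_def by simp
    qed
  qed
  define f where "f r = (r - lo) div 4" for r
  have fin: "finite K" using K finite_subset by blast
  have "f ` K \<subseteq> {0,1,2}"
  proof
    fix z assume "z \<in> f ` K"
    then obtain r where r: "r \<in> K" "z = f r" by auto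
    from Kl[OF r(1)] have "r - lo \<le> 11" by linarith
    then have "(r - lo) div 4 \<le> 2" by simp
    then show "z \<in> {0,1,2}" using r unfolding f_def by auto
  qed
  moreover have "\<not> inj_on f K"
  proof
    assume "inj_on f K"
    from card_inj_on_le[OF this \<open>f ` K \<subseteq> {0,1,2}\<close>] c show False by simp
  qed
  then obtain x y where xy: "x \<in> K" "y \<in> K" "x \<noteq> y" "f x = f y" unfolding inj_on_def by blast
  have "x \<le> y + 3 \<and> y \<le> x + 3"
    using xy(4) Kl[OF xy(1)] Kl[OF xy(2)] unfolding f_def by linarith
  moreover have "1 \<le> x" "1 \<le> y" "x \<le> 13" "y \<le> 13" using xy K by auto
  ultimately have "x \<in> K \<and> y \<in> K \<and> x \<noteq> y \<and> 1 \<le> min (min x y) 10 \<and> min (min x y) 10 + 3 \<le> 13 \<and> min (min x y) 10 \<le> x \<and> x \<le> min (min x y) 10 + 3 \<and> min (min x y) 10 \<le> y \<and> y \<le> min (min x y) 10 + 3"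
    using xy by (simp add: min_def)
  then show ?thesis by blast
qed

lemma four_lemma:
  assumes K: "K \<subseteq> {1..13::nat}" and c: "card K \<ge> 4"
  shows "\<exists>W x y. pure_sequence W \<and> card W = 4 \<and> W \<subseteq> deck \<and> finite W \<and> W \<subseteq> range (Std s) \<and>
     x \<in> K \<and> y \<in> K \<and> x \<noteq> y \<and> Std s x \<in> W \<and> Std s y \<in> W"
proof -
  from pair_lemma[OF K c] show ?thesis
  proof
    assume a: "1 \<in> K \<and> 13 \<in> K"
    have "card {Std s 11, Std s 12, Std s 13, Std s 1} = 4" by simp
    moreover have "{Std s 11, Std s 12, Std s 13, Std s 1} \<subseteq> deck" unfolding deck_def by auto
    moreover have "{Std s 11, Std s 12, Std s 13, Std s 1} \<subseteq> range (Std s)" by auto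
    moreover have "finite {Std s 11, Std s 12, Std s 13, Std s 1}" by simp
    moreover have "Std s 1 \<in> {Std s 11, Std s 12, Std s 13, Std s 1}" "Std s 13 \<in> {Std s 11, Std s 12, Std s 13, Std s 1}" by auto
    moreover have "(1::nat) \<noteq> 13" by simp
    ultimately show ?thesis using a hi_pure[of s] by blast
  next
    assume "\<exists>x y i. x \<in> K \<and> y \<in> K \<and> x \<noteq> y \<and> 1 \<le> i \<and> i + 3 \<le> 13 \<and> i \<le> x \<and> x \<le> i + 3 \<and> i \<le> y \<and> y \<le> i + 3"
    then obtain x y i where a: "x \<in> K" "y \<in> K" "x \<noteq> y" "1 \<le> i" "i + 3 \<le> 13" "i \<le> x" "x \<le> i + 3" "i \<le> y" "y \<le> i + 3"
      by blast
    have "pure_sequence (run s i (i+3))" using a by (intro run_pure) auto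
    moreover have "run s i (i+3) \<subseteq> deck" using a by (intro run_deck) auto
    moreover have "run s i (i+3) \<subseteq> range (Std s)" unfolding run_def by auto
    moreover have "card (run s i (i+3)) = 4" "finite (run s i (i+3))" by simp_all
    moreover have "Std s x \<in> run s i (i+3)" "Std s y \<in> run s i (i+3)" using a by simp_all
    ultimately show ?thesis using a by blast
  qed
qed

lemma decl4:
  assumes "pure_sequence A" "pure_sequence B" "is_meld wcj C" "is_meld wcj D"
    "A \<subseteq> deck" "B \<subseteq> deck" "C \<subseteq> deck" "D \<subseteq> deck"
    "finite A" "finite B" "finite C" "finite D"
    "A \<noteq> {}" "B \<noteq> {}" "C \<noteq> {}" "D \<noteq> {}"
    "A \<inter> B = {}" "A \<inter> C = {}" "A \<inter> D = {}" "B \<inter> C = {}" "B \<inter> D = {}" "C \<inter> D = {}"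
    "card A + card B + card C + card D = 13"
  shows "declarable wcj (A \<union> B \<union> C \<union> D)"
proof -
  have c: "card (A \<union> B \<union> C \<union> D) = 13"
  proof -
    have "card (A \<union> B) = card A + card B" using assms by (simp add: card_Un_disjoint)
    moreover have "card (A \<union> B \<union> C) = card (A \<union> B) + card C" using assms by (intro card_Un_disjoint) auto
    moreover have "card (A \<union> B \<union> C \<union> D) = card (A \<union> B \<union> C) + card D" using assms by (intro card_Un_disjoint) auto
    ultimately show ?thesis using assms by simp
  qed
  have p: "partition_on (A \<union> B \<union> C \<union> D) {A, B, C, D}"
    unfolding partition_on_def disjoint_def using assms by (auto simp: Int_commute)
  have "A \<noteq> B" using assms by auto
  then show ?thesis unfolding declarable_def is_hand_def
    using assms c p
    apply (intro conjI)
      apply blast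
     apply simp
    apply (rule exI[of _ "{A, B, C, D}"])
    by (auto simp: is_meld_def is_sequence_def)
qed

lemma decl3:
  assumes "pure_sequence A" "pure_sequence B" "is_meld wcj C"
    "A \<subseteq> deck" "B \<subseteq> deck" "C \<subseteq> deck"
    "finite A" "finite B" "finite C"
    "A \<noteq> {}" "B \<noteq> {}" "C \<noteq> {}"
    "A \<inter> B = {}" "A \<inter> C = {}" "B \<inter> C = {}"
    "card A + card B + card C = 13"
  shows "declarable wcj (A \<union> B \<union> C)"
proof -
  have c: "card (A \<union> B \<union> C) = 13"
  proof -
    have "card (A \<union> B) = card A + card B" using assms by (simp add: card_Un_disjoint)
    moreover have "card (A \<union> B \<union> C) = card (A \<union> B) + card C" using assms by (intro card_Un_disjoint) auto
    ultimately show ?thesis using assms by simp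
  qed
  have p: "partition_on (A \<union> B \<union> C) {A, B, C}"
    unfolding partition_on_def disjoint_def using assms by (auto simp: Int_commute)
  have "A \<noteq> B" using assms by auto
  then show ?thesis unfolding declarable_def is_hand_def
    using assms c p
    apply (intro conjI)
      apply blast
     apply simp
    apply (rule exI[of _ "{A, B, C}"])
    by (auto simp: is_meld_def is_sequence_def)
qed

lemma good:
  assumes "finite h" "declarable wcj h'" "card (h \<inter> h') \<ge> 5"
  shows "MinDist h wcj \<le> 8"
proof -
  let ?S = "{dist h h' | h'. declarable wcj h'}"
  have "?S \<subseteq> {..13}" unfolding dist_def by auto
  then have f: "finite ?S" using finite_subset by blast
  have "dist h h' \<in> ?S" using assms by blast
  then have "Min ?S \<le> dist h h'" using f by (rule Min_le[rotated])
  also have "\<dots> \<le> 8" unfolding dist_def using assms(3) by simp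
  finally show ?thesis unfolding MinDist_def .
qed

definition HS :: "card set \<Rightarrow> suit \<Rightarrow> nat set" where
  "HS h s = {r. Std s r \<in> h}"

lemma HS_sub: "h \<subseteq> deck \<Longrightarrow> HS h s \<subseteq> {1..13}"
  unfolding HS_def deck_def by auto

lemma card_bound:
  assumes "h \<subseteq> deck" "finite h"
  shows "card h \<le> card (HS h Spades) + card (HS h Hearts) + card (HS h Diamonds) + card (HS h Clubs)
     + (if PJoker \<in> h then 1 else 0)"
proof -
  have fin: "finite (HS h s)" for s using HS_sub[OF assms(1)] finite_subset by blast
  have sub: "h \<subseteq> Std Spades ` HS h Spades \<union> Std Hearts ` HS h Hearts \<union> Std Diamonds ` HS h Diamonds
     \<union> Std Clubs ` HS h Clubs \<union> (h \<inter> {PJoker})" (is "_ \<subseteq> ?U")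
  proof
    fix c assume c: "c \<in> h"
    show "c \<in> ?U"
    proof (cases c)
      case (Std s r)
      then show ?thesis using c by (cases s) (auto simp: HS_def)
    next
      case PJoker
      then show ?thesis using c by auto
    qed
  qed
  have "card h \<le> card ?U" using sub fin by (intro card_mono) auto
  also have "\<dots> \<le> card (Std Spades ` HS h Spades) + card (Std Hearts ` HS h Hearts) + card (Std Diamonds ` HS h Diamonds)
     + card (Std Clubs ` HS h Clubs) + card (h \<inter> {PJoker})"
    by (rule order_trans[OF card_Un_le] add_mono)+ simp_all
  also have "\<dots> \<le> card (HS h Spades) + card (HS h Hearts) + card (HS h Diamonds) + card (HS h Clubs)
     + (if PJoker \<in> h then 1 else 0)"
    by (intro add_mono card_image_le fin) auto
  finally show ?thesis .
qed

lemma HS_mem: "r \<in> HS h s \<longleftrightarrow> Std s r \<in> h" unfolding HS_def by simp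

lemma run3:
  assumes "r \<in> HS h s" "h \<subseteq> deck"
  shows "\<exists>R. pure_sequence R \<and> R \<subseteq> deck \<and> finite R \<and> card R = 3 \<and> R \<subseteq> range (Std s) \<and> Std s r \<in> R"
proof -
  have r: "1 \<le> r" "r \<le> 13" using HS_sub[OF assms(2), of s] assms(1) by auto
  define i where "i = min r 11"
  have "pure_sequence (run s i (i+2))" using r unfolding i_def by (intro run_pure) auto
  moreover have "run s i (i+2) \<subseteq> deck" using r unfolding i_def by (intro run_deck) auto
  moreover have "finite (run s i (i+2))" "card (run s i (i+2)) = 3" by simp_all
  moreover have "run s i (i+2) \<subseteq> range (Std s)" unfolding run_def by auto
  moreover have "Std s r \<in> run s i (i+2)" using r unfolding i_def by (simp add: min_def)
  ultimately show ?thesis by blast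
qed

lemma run5:
  assumes "r \<in> HS h s" "h \<subseteq> deck"
  shows "\<exists>R. pure_sequence R \<and> R \<subseteq> deck \<and> finite R \<and> card R = 5 \<and> R \<subseteq> range (Std s) \<and> Std s r \<in> R"
proof -
  have r: "1 \<le> r" "r \<le> 13" using HS_sub[OF assms(2), of s] assms(1) by auto
  define i where "i = min r 9"
  have "pure_sequence (run s i (i+4))" using r unfolding i_def by (intro run_pure) auto
  moreover have "run s i (i+4) \<subseteq> deck" using r unfolding i_def by (intro run_deck) auto
  moreover have "finite (run s i (i+4))" "card (run s i (i+4)) = 5" by simp_all
  moreover have "run s i (i+4) \<subseteq> range (Std s)" unfolding run_def by auto
  moreover have "Std s r \<in> run s i (i+4)" using r unfolding i_def by (simp add: min_def)
  ultimately show ?thesis by blast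
qed

lemma imp4:
  assumes "r \<in> HS h s" "h \<subseteq> deck"
  shows "\<exists>R. is_meld wcj R \<and> R \<subseteq> deck \<and> finite R \<and> card R = 4 \<and> R \<subseteq> insert PJoker (range (Std s))
     \<and> Std s r \<in> R \<and> PJoker \<in> R"
proof -
  have r: "1 \<le> r" "r \<le> 13" using HS_sub[OF assms(2), of s] assms(1) by auto
  define i where "i = min r 10"
  define q where "q = (if r = i then i + 1 else i)"
  define T where "T = run s i (i+3)"
  define R where "R = (T - {Std s q}) \<union> {PJoker}"
  have q: "i \<le> q" "q \<le> i + 3" "q \<noteq> r" unfolding q_def using r i_def by auto
  have T1: "pure_sequence T" using r unfolding i_def T_def by (intro run_pure) auto
  have T2: "T \<subseteq> deck" using r unfolding i_def T_def by (intro run_deck) auto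
  note T = T1 T2
  have qT: "Std s q \<in> T" unfolding T_def using q by simp
  have "impure_sequence wcj R" unfolding impure_sequence_def impure_def
    apply (rule exI[of _ T], rule exI[of _ "{Std s q}"], rule exI[of _ "{PJoker}"])
    using T qT by (auto simp: deck_def is_joker_def R_def T_def)
  then have "is_meld wcj R" by (simp add: is_meld_def)
  moreover have "R \<subseteq> deck" using T unfolding R_def deck_def by auto
  moreover have "finite R" unfolding R_def T_def by simp
  moreover have "card R = 4"
  proof -
    have "card (T - {Std s q}) = 3" using qT unfolding T_def by simp
    moreover have "PJoker \<notin> T - {Std s q}" unfolding T_def by simp
    ultimately show ?thesis unfolding R_def T_def by simp
  qed
  moreover have "R \<subseteq> insert PJoker (range (Std s))" unfolding R_def T_def run_def by auto
  moreover have "Std s r \<in> R" unfolding R_def T_def using q r i_def by (simp add: min_def)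
  moreover have "PJoker \<in> R" unfolding R_def by simp
  ultimately show ?thesis by blast
qed

lemma caseC:
  assumes h: "h \<subseteq> deck" "finite h"
    and d: "s1 \<noteq> s2" "s1 \<noteq> s3" "s1 \<noteq> s4" "s2 \<noteq> s3" "s2 \<noteq> s4" "s3 \<noteq> s4"
    and c1: "card (HS h s1) \<ge> 4"
    and r: "r2 \<in> HS h s2" "r3 \<in> HS h s3" "r4 \<in> HS h s4"
  shows "\<exists>h'. declarable wcj h' \<and> 5 \<le> card (h \<inter> h')"
proof -
  obtain W x y where W: "pure_sequence W" "card W = 4" "W \<subseteq> deck" "finite W" "W \<subseteq> range (Std s1)"
     "x \<in> HS h s1" "y \<in> HS h s1" "x \<noteq> y" "Std s1 x \<in> W" "Std s1 y \<in> W"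
    using four_lemma[OF HS_sub[OF h(1)] c1, of s1] by blast
  obtain R2 where R2: "pure_sequence R2" "R2 \<subseteq> deck" "finite R2" "card R2 = 3" "R2 \<subseteq> range (Std s2)" "Std s2 r2 \<in> R2"
    using run3[OF r(1) h(1)] by blast
  obtain R3 where R3: "pure_sequence R3" "R3 \<subseteq> deck" "finite R3" "card R3 = 3" "R3 \<subseteq> range (Std s3)" "Std s3 r3 \<in> R3"
    using run3[OF r(2) h(1)] by blast
  obtain R4 where R4: "pure_sequence R4" "R4 \<subseteq> deck" "finite R4" "card R4 = 3" "R4 \<subseteq> range (Std s4)" "Std s4 r4 \<in> R4"
    using run3[OF r(3) h(1)] by blast
  have "declarable wcj (R2 \<union> R3 \<union> W \<union> R4)"
    apply (rule decl4)
    using W R2 R3 R4 d by (auto simp: is_meld_def)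
  moreover have "5 \<le> card (h \<inter> (R2 \<union> R3 \<union> W \<union> R4))"
  proof -
    have "{Std s1 x, Std s1 y, Std s2 r2, Std s3 r3, Std s4 r4} \<subseteq> h \<inter> (R2 \<union> R3 \<union> W \<union> R4)"
      using W R2 R3 R4 r by (auto simp: HS_def)
    moreover have "card {Std s1 x, Std s1 y, Std s2 r2, Std s3 r3, Std s4 r4} = 5"
      using d W(8) by simp
    ultimately show ?thesis using h(2) by (metis card_mono finite_Int)
  qed
  ultimately show ?thesis by blast
qed

lemma caseD:
  assumes h: "h \<subseteq> deck" "finite h" "PJoker \<in> h"
    and d: "s1 \<noteq> s2" "s1 \<noteq> s3" "s1 \<noteq> s4" "s2 \<noteq> s3" "s2 \<noteq> s4" "s3 \<noteq> s4"
    and r: "r1 \<in> HS h s1" "r2 \<in> HS h s2" "r3 \<in> HS h s3" "r4 \<in> HS h s4"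
  shows "\<exists>h'. declarable wcj h' \<and> 5 \<le> card (h \<inter> h')"
proof -
  obtain W where W: "is_meld wcj W" "W \<subseteq> deck" "finite W" "card W = 4" "W \<subseteq> insert PJoker (range (Std s1))"
     "Std s1 r1 \<in> W" "PJoker \<in> W"
    using imp4[OF r(1) h(1), of wcj] by blast
  obtain R2 where R2: "pure_sequence R2" "R2 \<subseteq> deck" "finite R2" "card R2 = 3" "R2 \<subseteq> range (Std s2)" "Std s2 r2 \<in> R2"
    using run3[OF r(2) h(1)] by blast
  obtain R3 where R3: "pure_sequence R3" "R3 \<subseteq> deck" "finite R3" "card R3 = 3" "R3 \<subseteq> range (Std s3)" "Std s3 r3 \<in> R3"
    using run3[OF r(3) h(1)] by blast
  obtain R4 where R4: "pure_sequence R4" "R4 \<subseteq> deck" "finite R4" "card R4 = 3" "R4 \<subseteq> range (Std s4)" "Std s4 r4 \<in> R4"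
    using run3[OF r(4) h(1)] by blast
  have "declarable wcj (R2 \<union> R3 \<union> W \<union> R4)"
    apply (rule decl4)
    using W R2 R3 R4 d by (auto simp: is_meld_def)
  moreover have "5 \<le> card (h \<inter> (R2 \<union> R3 \<union> W \<union> R4))"
  proof -
    have "{PJoker, Std s1 r1, Std s2 r2, Std s3 r3, Std s4 r4} \<subseteq> h \<inter> (R2 \<union> R3 \<union> W \<union> R4)"
      using W R2 R3 R4 r h(3) by (auto simp: HS_def)
    moreover have "card {PJoker, Std s1 r1, Std s2 r2, Std s3 r3, Std s4 r4} = 5"
      using d by simp
    ultimately show ?thesis using h(2) by (metis card_mono finite_Int)
  qed
  ultimately show ?thesis by blast
qed

lemma caseB:
  assumes h: "h \<subseteq> deck" "finite h"
    and d: "s1 \<noteq> s2" "s1 \<noteq> s3" "s2 \<noteq> s3"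
    and c: "card (HS h s1) \<ge> 4" "card (HS h s2) \<ge> 4"
    and r: "r3 \<in> HS h s3"
  shows "\<exists>h'. declarable wcj h' \<and> 5 \<le> card (h \<inter> h')"
proof -
  obtain W x y where W: "pure_sequence W" "card W = 4" "W \<subseteq> deck" "finite W" "W \<subseteq> range (Std s1)"
     "x \<in> HS h s1" "y \<in> HS h s1" "x \<noteq> y" "Std s1 x \<in> W" "Std s1 y \<in> W"
    using four_lemma[OF HS_sub[OF h(1)] c(1), of s1] by blast
  obtain V u v where V: "pure_sequence V" "card V = 4" "V \<subseteq> deck" "finite V" "V \<subseteq> range (Std s2)"
     "u \<in> HS h s2" "v \<in> HS h s2" "u \<noteq> v" "Std s2 u \<in> V" "Std s2 v \<in> V"
    using four_lemma[OF HS_sub[OF h(1)] c(2), of s2] by blast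
  obtain R3 where R3: "pure_sequence R3" "R3 \<subseteq> deck" "finite R3" "card R3 = 5" "R3 \<subseteq> range (Std s3)" "Std s3 r3 \<in> R3"
    using run5[OF r(1) h(1)] by blast
  have "declarable wcj (W \<union> V \<union> R3)"
    apply (rule decl3)
    using W V R3 d by (auto simp: is_meld_def)
  moreover have "5 \<le> card (h \<inter> (W \<union> V \<union> R3))"
  proof -
    have "{Std s1 x, Std s1 y, Std s2 u, Std s2 v, Std s3 r3} \<subseteq> h \<inter> (W \<union> V \<union> R3)"
      using W V R3 r by (auto simp: HS_def)
    moreover have "card {Std s1 x, Std s1 y, Std s2 u, Std s2 v, Std s3 r3} = 5"
      using d W(8) V(8) by simp
    ultimately show ?thesis using h(2) by (metis card_mono finite_Int)
  qed
  ultimately show ?thesis by blast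
qed

lemma caseA:
  assumes h: "h \<subseteq> deck" "finite h" and c: "card (HS h s) \<ge> 5"
  shows "\<exists>h'. declarable wcj h' \<and> 5 \<le> card (h \<inter> h')"
proof -
  have "declarable wcj (run s 1 3 \<union> run s 4 6 \<union> run s 7 9 \<union> run s 10 13)"
    apply (rule decl4)
                      apply (auto simp: is_meld_def intro!: run_pure)
    by (auto simp: run_def deck_def)
  moreover have "5 \<le> card (h \<inter> (run s 1 3 \<union> run s 4 6 \<union> run s 7 9 \<union> run s 10 13))"
  proof -
    have "Std s ` HS h s \<subseteq> h \<inter> (run s 1 3 \<union> run s 4 6 \<union> run s 7 9 \<union> run s 10 13)"
      using HS_sub[OF h(1), of s] by (auto simp: HS_def)
    moreover have "card (Std s ` HS h s) = card (HS h s)" by (rule card_image) (simp add: inj_on_def)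
    moreover have "finite (h \<inter> (run s 1 3 \<union> run s 4 6 \<union> run s 7 9 \<union> run s 10 13))" using h(2) by simp
    ultimately have "card (HS h s) \<le> card (h \<inter> (run s 1 3 \<union> run s 4 6 \<union> run s 7 9 \<union> run s 10 13))"
      using card_mono by metis
    then show ?thesis using c by linarith
  qed
  ultimately show ?thesis by blast
qed

lemma main_ex:
  assumes h: "h \<subseteq> deck" "finite h" "card h = 13"
  shows "\<exists>h'. declarable wcj h' \<and> 5 \<le> card (h \<inter> h')"
proof -
  have bound: "13 \<le> card (HS h Spades) + card (HS h Hearts) + card (HS h Diamonds) + card (HS h Clubs)
     + (if PJoker \<in> h then 1 else 0)" using card_bound[OF h(1,2)] h(3) by simp
  have ne: "\<exists>r. r \<in> HS h s" if "card (HS h s) \<noteq> 0" for s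
    using that by (metis card.empty ex_in_conv)
  show ?thesis
  proof (cases "\<exists>s. card (HS h s) \<ge> 5")
    case True
    then obtain s where "card (HS h s) \<ge> 5" by blast
    then show ?thesis using caseA[OF h(1,2)] by blast
  next
    case False
    have le4: "card (HS h s) \<le> 4" for s
    proof -
      have "\<not> 5 \<le> card (HS h s)" using False by blast
      then show ?thesis by linarith
    qed
    note l = le4[of Spades] le4[of Hearts] le4[of Diamonds] le4[of Clubs]
    show ?thesis
    proof (cases "card (HS h Spades) = 0")
      case True
      then have X: "card (HS h Hearts) \<ge> 4" "card (HS h Diamonds) \<ge> 4" "card (HS h Clubs) \<noteq> 0"
        using bound l by (auto split: if_splits)
      obtain rr where rr: "rr \<in> HS h Clubs" using ne[OF X(3)] by blast
      show ?thesis by (rule caseB[OF h(1,2) _ _ _ X(1) X(2) rr]) simp_all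
    next
      case z0: False
      show ?thesis
      proof (cases "card (HS h Hearts) = 0")
        case True
        then have X: "card (HS h Spades) \<ge> 4" "card (HS h Diamonds) \<ge> 4" "card (HS h Clubs) \<noteq> 0"
          using bound l by (auto split: if_splits)
        obtain rr where rr: "rr \<in> HS h Clubs" using ne[OF X(3)] by blast
        show ?thesis by (rule caseB[OF h(1,2) _ _ _ X(1) X(2) rr]) simp_all
      next
        case z1: False
        show ?thesis
        proof (cases "card (HS h Diamonds) = 0")
          case True
          then have X: "card (HS h Spades) \<ge> 4" "card (HS h Hearts) \<ge> 4" "card (HS h Clubs) \<noteq> 0"
            using bound l by (auto split: if_splits)
          obtain rr where rr: "rr \<in> HS h Clubs" using ne[OF X(3)] by blast
          show ?thesis by (rule caseB[OF h(1,2) _ _ _ X(1) X(2) rr]) simp_all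
        next
          case z2: False
          show ?thesis
          proof (cases "card (HS h Clubs) = 0")
            case True
            then have X: "card (HS h Spades) \<ge> 4" "card (HS h Hearts) \<ge> 4" "card (HS h Diamonds) \<noteq> 0"
              using bound l by (auto split: if_splits)
            obtain rr where rr: "rr \<in> HS h Diamonds" using ne[OF X(3)] by blast
            show ?thesis by (rule caseB[OF h(1,2) _ _ _ X(1) X(2) rr]) simp_all
          next
            case z3: False
            obtain rS rH rD rC where r: "rS \<in> HS h Spades" "rH \<in> HS h Hearts" "rD \<in> HS h Diamonds" "rC \<in> HS h Clubs"
              using ne[OF z0] ne[OF z1] ne[OF z2] ne[OF z3] by blast
            show ?thesis
            proof (cases "card (HS h Spades) \<ge> 4")
              case True
              show ?thesis by (rule caseC[OF h(1,2) _ _ _ _ _ _ True r(2) r(3) r(4)]) simp_all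
            next
              case w0: False
              show ?thesis
              proof (cases "card (HS h Hearts) \<ge> 4")
                case True
                show ?thesis by (rule caseC[OF h(1,2) _ _ _ _ _ _ True r(1) r(3) r(4)]) simp_all
              next
                case w1: False
                show ?thesis
                proof (cases "card (HS h Diamonds) \<ge> 4")
                  case True
                  show ?thesis by (rule caseC[OF h(1,2) _ _ _ _ _ _ True r(1) r(2) r(4)]) simp_all
                next
                  case w2: False
                  show ?thesis
                  proof (cases "card (HS h Clubs) \<ge> 4")
                    case True
                    show ?thesis by (rule caseC[OF h(1,2) _ _ _ _ _ _ True r(1) r(2) r(3)]) simp_all
                  next
                    case w3: False
                    have "PJoker \<in> h"
                    proof (rule ccontr)
                      assume "PJoker \<notin> h"
                      then show False using bound w0 w1 w2 w3 by simp
                    qed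
                    then show ?thesis by (rule caseD[OF h(1,2) _ _ _ _ _ _ _ r]) simp_all
                  qed
                qed
              qed
            qed
          qed
        qed
      qed
    qed
  qed
qed

theorem proposition2:
  assumes "is_hand h"
    and "wcj \<in> deck" and "wcj \<noteq> PJoker"
  shows "MinDist h wcj \<le> 8"
proof -
  have h: "h \<subseteq> deck" "card h = 13" using assms(1) unfolding is_hand_def by auto
  then have f: "finite h" by (metis card.infinite zero_neq_numeral)
  obtain h' where "declarable wcj h'" "5 \<le> card (h \<inter> h')" using main_ex[OF h(1) f h(2)] by blast
  then show ?thesis using good[OF f] by blast
qed

end
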